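(* Let $\mathcal{I}$ be an ideal on $\mathbb{N}$ with the Baire property. A Banach space $X$ contains no (isomorphic) copy of $c_0$ if and only if for each series $\sum x_n$ in $X$ which is not unconditionally convergent the set $A(\mathcal{I},(x_n))=\left\{t \in \{0,1\}^{\mathbb{N}} : \left(\sum_{i=1}^n t(i)x_{i}\right)_n \text{ is } \mathcal{I}\text{-bounded}\right\}$ is meager in $\{0,1\}^{\mathbb{N}}$.
   Context: An ideal on $\mathbb{N}$ is a family $\mathcal{I}\subset \mathcal{P}(\mathbb{N})$ with $\emptyset\in\mathcal{I}$, closed under finite unions and subsets, with $\mathbb{N}\notin\mathcal{I}$ and containing all finite subsets of $\mathbb{N}$. Identifying $\mathcal{P}(\mathbb{N})$ with $\{0,1\}^{\mathbb{N}}$ (product topology of discrete spaces), $\mathcal{I}$ has the Baire property if it is the symmetric difference of an open set and a meager set. A sequence $(y_n)$ in a normed space is $\mathcal{I}$-bounded if there is $M>0$ with $\{n\in\mathbb{N} : \|y_n\|>M\}\in\mathcal{I}$. *)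

theory Defs
  imports "HOL-Analysis.Analysis"
begin

text \<open>Cantor space: the type nat \<Rightarrow> bool with the product topology
  (library instance from Function_Topology; bool carries its discrete order topology).\<close>

definition nowhere_dense :: "'a::topological_space set \<Rightarrow> bool" where
  "nowhere_dense S \<longleftrightarrow> interior (closure S) = {}"

definition meager :: "'a::topological_space set \<Rightarrow> bool" where
  "meager S \<longleftrightarrow> (\<exists>F::nat \<Rightarrow> 'a set. (\<forall>n. nowhere_dense (F n)) \<and> S \<subseteq> (\<Union>n. F n))"

definition has_baire_property :: "'a::topological_space set \<Rightarrow> bool" where
  "has_baire_property S \<longleftrightarrow> (\<exists>U M. open U \<and> meager M \<and> S = (U - M) \<union> (M - U))"

definition ideal_on_nat :: "nat set set \<Rightarrow> bool" where
  "ideal_on_nat I \<longleftrightarrow> {} \<in> I \<and> (\<forall>A\<in>I. \<forall>B\<in>I. A \<union> B \<in> I)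
     \<and> (\<forall>A\<in>I. \<forall>B. B \<subseteq> A \<longrightarrow> B \<in> I) \<and> UNIV \<notin> I \<and> (\<forall>A. finite A \<longrightarrow> A \<in> I)"

definition ideal_as_cantor :: "nat set set \<Rightarrow> (nat \<Rightarrow> bool) set" where
  "ideal_as_cantor I = {t. {n. t n} \<in> I}"

definition I_bounded :: "nat set set \<Rightarrow> (nat \<Rightarrow> 'a::real_normed_vector) \<Rightarrow> bool" where
  "I_bounded I y \<longleftrightarrow> (\<exists>M>0. {n. norm (y n) > M} \<in> I)"

definition unconditionally_convergent :: "(nat \<Rightarrow> 'a::real_normed_vector) \<Rightarrow> bool" where
  "unconditionally_convergent x \<longleftrightarrow> (\<forall>\<sigma>. bij \<sigma> \<longrightarrow> summable (x \<circ> \<sigma>))"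

definition A_set :: "nat set set \<Rightarrow> (nat \<Rightarrow> 'a::real_normed_vector) \<Rightarrow> (nat \<Rightarrow> bool) set" where
  "A_set I x = {t. I_bounded I (\<lambda>n. \<Sum>i\<le>n. (if t i then 1 else 0) *\<^sub>R x i)}"

definition c0 :: "(nat \<Rightarrow> real) set" where
  "c0 = {f. f \<longlonglongrightarrow> 0}"

definition sup_norm :: "(nat \<Rightarrow> real) \<Rightarrow> real" where
  "sup_norm f = (SUP n. \<bar>f n\<bar>)"

definition contains_c0 :: "'a::real_normed_vector itself \<Rightarrow> bool" where
  "contains_c0 _ \<longleftrightarrow> (\<exists>(T::(nat \<Rightarrow> real) \<Rightarrow> 'a) m M. 0 < m \<and> 0 < M
     \<and> (\<forall>f\<in>c0. \<forall>g\<in>c0. \<forall>a b. T (\<lambda>n. a * f n + b * g n) = a *\<^sub>R T f + b *\<^sub>R T g)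
     \<and> (\<forall>f\<in>c0. m * sup_norm f \<le> norm (T f) \<and> norm (T f) \<le> M * sup_norm f))"

end

theory Submission
  imports Defs
begin

definition cyl :: "(nat \<Rightarrow> bool) \<Rightarrow> nat \<Rightarrow> (nat \<Rightarrow> bool) set" where
  "cyl s n = {t. \<forall>i<n. t i = s i}"

lemma cyl_self[simp]: "s \<in> cyl s n" by (simp add: cyl_def)

lemma cyl_mono: "n \<le> m \<Longrightarrow> cyl s m \<subseteq> cyl s n" by (auto simp: cyl_def)

lemma cyl_sub: "t \<in> cyl s n \<Longrightarrow> n \<le> m \<Longrightarrow> cyl t m \<subseteq> cyl s n"
  by (auto simp: cyl_def)

lemma open_cyl: "open (cyl s n)"
proof -
  have "open {f::nat\<Rightarrow>bool. \<forall>i\<in>{..<n}. f (id i) \<in> {s i}}"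
    by (rule product_topology_basis') (auto simp: open_discrete)
  moreover have "{f::nat\<Rightarrow>bool. \<forall>i\<in>{..<n}. f (id i) \<in> {s i}} = cyl s n"
    by (auto simp: cyl_def)
  ultimately show ?thesis by simp
qed

lemma open_contains_cyl:
  assumes "open U" "x \<in> U"
  shows "\<exists>n. cyl x n \<subseteq> U"
proof -
  have "openin (product_topology (\<lambda>i. euclidean) UNIV) U" using assms(1) unfolding open_fun_def .
  from product_topology_open_contains_basis[OF this assms(2)]
  obtain X where X0: "x \<in> (\<Pi>\<^sub>E i\<in>UNIV. X i)" "finite {i. X i \<noteq> topspace euclidean}"
     "(\<Pi>\<^sub>E i\<in>UNIV. X i) \<subseteq> U"
    by blast
  then have X: "x \<in> (\<Pi>\<^sub>E i\<in>UNIV. X i)" "finite {i. X i \<noteq> UNIV}"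
     "(\<Pi>\<^sub>E i\<in>UNIV. X i) \<subseteq> U" by simp_all
  obtain n where n: "{i. X i \<noteq> UNIV} \<subseteq> {..<n}"
    using finite_nat_bounded[OF X(2)] by blast
  have "cyl x n \<subseteq> (\<Pi>\<^sub>E i\<in>UNIV. X i)"
  proof
    fix t assume t: "t \<in> cyl x n"
    show "t \<in> (\<Pi>\<^sub>E i\<in>UNIV. X i)"
    proof (simp add: PiE_iff, intro allI)
      fix i show "t i \<in> X i"
      proof (cases "X i = UNIV")
        case False then have "i \<in> {..<n}" using n by blast
        then have "i < n" by simp
        then have "t i = x i" using t by (simp add: cyl_def)
        then show ?thesis using X(1) by (auto simp: PiE_iff)
      qed auto
    qed
  qed
  then show ?thesis using X(3) by blast
qed

definition ND :: "(nat \<Rightarrow> bool) set \<Rightarrow> bool" where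
  "ND S \<longleftrightarrow> (\<forall>s n. \<exists>s' m. cyl s' m \<subseteq> cyl s n \<and> cyl s' m \<inter> S = {})"

lemma nowhere_dense_ND: "nowhere_dense S \<longleftrightarrow> ND S"
proof
  assume nd: "nowhere_dense S"
  show "ND S" unfolding ND_def
  proof (intro allI)
    fix s n
    have "\<not> cyl s n \<subseteq> closure S"
    proof
      assume "cyl s n \<subseteq> closure S"
      then have "cyl s n \<subseteq> interior (closure S)"
        using open_cyl interior_maximal by blast
      then have "cyl s n = {}" using nd by (auto simp: nowhere_dense_def)
      then show False using cyl_self[of s n] by blast
    qed
    then obtain x where x: "x \<in> cyl s n" "x \<notin> closure S" by auto
    obtain m where m: "cyl x m \<subseteq> - closure S"
      using open_contains_cyl[of "- closure S" x] x by auto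
    have "cyl x (max m n) \<subseteq> cyl s n" using cyl_sub[OF x(1)] by auto
    moreover have "cyl x (max m n) \<inter> S = {}"
      using cyl_mono[of m "max m n" x] m closure_subset by fastforce
    ultimately show "\<exists>s' m. cyl s' m \<subseteq> cyl s n \<and> cyl s' m \<inter> S = {}" by blast
  qed
next
  assume nd: "ND S"
  show "nowhere_dense S" unfolding nowhere_dense_def
  proof (rule ccontr)
    assume "interior (closure S) \<noteq> {}"
    then obtain x where x: "x \<in> interior (closure S)" by auto
    obtain n where n: "cyl x n \<subseteq> interior (closure S)"
      using open_contains_cyl[OF open_interior x] by auto
    obtain s' m where sm: "cyl s' m \<subseteq> cyl x n" "cyl s' m \<inter> S = {}"
      using nd unfolding ND_def by blast
    have "cyl s' m \<inter> closure S = {}"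
      using sm(2) open_cyl by (simp add: open_Int_closure_eq_empty)
    moreover have "s' \<in> closure S" using sm(1) n interior_subset by fastforce
    ultimately show False using cyl_self[of s' m] by (metis IntI empty_iff)
  qed
qed

lemma ND_step:
  assumes "ND S"
  shows "\<exists>s' m. m > n \<and> cyl s' m \<subseteq> cyl s n \<and> cyl s' m \<inter> S = {}"
proof -
  obtain s' m where sm: "cyl s' m \<subseteq> cyl s n" "cyl s' m \<inter> S = {}"
    using assms unfolding ND_def by blast
  have c: "cyl s' (max m (Suc n)) \<subseteq> cyl s' m" by (rule cyl_mono) simp
  have "n < max m (Suc n)" by simp
  moreover have "cyl s' (max m (Suc n)) \<subseteq> cyl s n" using c sm(1) by (rule subset_trans)
  moreover have "cyl s' (max m (Suc n)) \<inter> S = {}" using c sm(2) by blast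
  ultimately show ?thesis by blast
qed

lemma ND_subset: assumes "ND S" "T \<subseteq> S" shows "ND T"
  unfolding ND_def
proof (intro allI)
  fix s n
  obtain s' m where "cyl s' m \<subseteq> cyl s n" "cyl s' m \<inter> S = {}" using assms(1) unfolding ND_def by blast
  then show "\<exists>s' m. cyl s' m \<subseteq> cyl s n \<and> cyl s' m \<inter> T = {}" using assms(2) by (intro exI[of _ s'] exI[of _ m]) auto
qed

lemma ND_Un: "ND S \<Longrightarrow> ND T \<Longrightarrow> ND (S \<union> T)"
  unfolding ND_def
proof (intro allI)
  fix s n assume S: "\<forall>s n. \<exists>s' m. cyl s' m \<subseteq> cyl s n \<and> cyl s' m \<inter> S = {}"
    and T: "\<forall>s n. \<exists>s' m. cyl s' m \<subseteq> cyl s n \<and> cyl s' m \<inter> T = {}"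
  obtain s1 m1 where 1: "cyl s1 m1 \<subseteq> cyl s n" "cyl s1 m1 \<inter> S = {}" using S by blast
  obtain s2 m2 where 2: "cyl s2 m2 \<subseteq> cyl s1 m1" "cyl s2 m2 \<inter> T = {}" using T by blast
  show "\<exists>s' m. cyl s' m \<subseteq> cyl s n \<and> cyl s' m \<inter> (S \<union> T) = {}"
    using 1 2 by (intro exI[of _ s2] exI[of _ m2]) auto
qed

lemma meager_ND: "meager (S::(nat\<Rightarrow>bool) set) \<longleftrightarrow> (\<exists>F::nat \<Rightarrow> _. (\<forall>n. ND (F n)) \<and> S \<subseteq> (\<Union>n. F n))"
  unfolding meager_def nowhere_dense_ND ..

lemma meager_subset: assumes "meager S" "T \<subseteq> S" shows "meager T"
proof -
  obtain F :: "nat \<Rightarrow> _" where "\<forall>n. nowhere_dense (F n)" "S \<subseteq> (\<Union>n. F n)" using assms(1) unfolding meager_def by blast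
  then show ?thesis unfolding meager_def using assms(2) by (intro exI[of _ F]) auto
qed

lemma meager_UN:
  fixes S :: "nat \<Rightarrow> (nat \<Rightarrow> bool) set"
  assumes "\<And>k::nat. meager (S k)"
  shows "meager (\<Union>k. S k)"
proof -
  have "\<forall>k. \<exists>F::nat \<Rightarrow> _. (\<forall>n. ND (F n)) \<and> S k \<subseteq> (\<Union>j. F j)"
  proof
    fix k show "\<exists>F::nat \<Rightarrow> _. (\<forall>n. ND (F n)) \<and> S k \<subseteq> (\<Union>j. F j)"
      using assms[of k] unfolding meager_ND .
  qed
  then have "\<exists>F::nat \<Rightarrow> nat \<Rightarrow> _. \<forall>k. (\<forall>n. ND (F k n)) \<and> S k \<subseteq> (\<Union>j. F k j)"
    by (rule choice)
  then obtain F :: "nat \<Rightarrow> nat \<Rightarrow> _" where F0: "\<forall>k. (\<forall>n. ND (F k n)) \<and> S k \<subseteq> (\<Union>j. F k j)"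
    by (elim exE)
  then have F: "\<And>k j. ND (F k j)" "\<And>k. S k \<subseteq> (\<Union>j. F k j)" by simp_all
  define G where "G n = F (fst (prod_decode n)) (snd (prod_decode n))" for n
  have "ND (G n)" for n using F(1) by (simp add: G_def)
  moreover have "(\<Union>k. S k) \<subseteq> (\<Union>n. G n)"
  proof
    fix x assume "x \<in> (\<Union>k. S k)"
    then obtain k j where "x \<in> F k j" using F(2) by blast
    then have "x \<in> G (prod_encode (k, j))" by (simp add: G_def)
    then show "x \<in> (\<Union>n. G n)" by blast
  qed
  ultimately show ?thesis unfolding meager_ND by blast
qed

lemma meager_Un: "meager (S::(nat\<Rightarrow>bool) set) \<Longrightarrow> meager T \<Longrightarrow> meager (S \<union> T)"
proof -
  assume a: "meager S" "meager T"
  have "meager (\<Union>k::nat. if k = 0 then S else T)"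
    by (rule meager_UN) (simp add: a)
  moreover have "S \<union> T \<subseteq> (\<Union>k::nat. if k = 0 then S else T)"
  proof (intro subsetI)
    fix x assume "x \<in> S \<union> T"
    then show "x \<in> (\<Union>k::nat. if k = 0 then S else T)"
    proof
      assume "x \<in> S" then show ?thesis by (intro UN_I[of 0]) simp_all
    next
      assume "x \<in> T" then show ?thesis by (intro UN_I[of 1]) simp_all
    qed
  qed
  ultimately show ?thesis using meager_subset by blast
qed

lemma baire_cyl:
  assumes "meager M"
  shows "\<exists>t\<in>cyl s n. t \<notin> M"
proof -
  obtain F :: "nat \<Rightarrow> _" where F: "\<And>k. ND (F k)" "M \<subseteq> (\<Union>k. F k)"
    using assms unfolding meager_ND by blast
  have "\<forall>k p. \<exists>q. snd q > snd p \<and> cyl (fst q) (snd q) \<subseteq> cyl (fst p) (snd p)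
      \<and> cyl (fst q) (snd q) \<inter> F k = {}"
  proof (intro allI)
    fix k p
    obtain s' m where "m > snd p" "cyl s' m \<subseteq> cyl (fst p) (snd p)" "cyl s' m \<inter> F k = {}"
      using ND_step[OF F(1)] by blast
    then show "\<exists>q. snd q > snd p \<and> cyl (fst q) (snd q) \<subseteq> cyl (fst p) (snd p)
      \<and> cyl (fst q) (snd q) \<inter> F k = {}" by (intro exI[of _ "(s', m)"]) simp
  qed
  note ex = this
  define nx where "nx k p = (SOME q. snd q > snd p \<and> cyl (fst q) (snd q) \<subseteq> cyl (fst p) (snd p)
      \<and> cyl (fst q) (snd q) \<inter> F k = {})" for k p
  have nx: "snd (nx k p) > snd p \<and> cyl (fst (nx k p)) (snd (nx k p)) \<subseteq> cyl (fst p) (snd p)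
      \<and> cyl (fst (nx k p)) (snd (nx k p)) \<inter> F k = {}" for k p
    unfolding nx_def by (rule someI_ex) (use ex in blast)
  define q where "q k = rec_nat (s, n) (\<lambda>k p. nx k p) k" for k
  have q0: "q 0 = (s, n)" and qS: "q (Suc k) = nx k (q k)" for k by (simp_all add: q_def)
  define ss where "ss k = fst (q k)" for k
  define nn where "nn k = snd (q k)" for k
  have nnS: "nn (Suc k) > nn k" for k using nx qS by (simp add: nn_def)
  have sub: "cyl (ss (Suc k)) (nn (Suc k)) \<subseteq> cyl (ss k) (nn k)" for k
    using nx qS by (simp add: nn_def ss_def)
  have disj: "cyl (ss (Suc k)) (nn (Suc k)) \<inter> F k = {}" for k
    using nx qS by (simp add: nn_def ss_def)
  have nnk: "nn k \<ge> k" for k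
    by (induction k) (use nnS in \<open>auto simp: Suc_le_eq intro: le_less_trans\<close>)
  have subg: "j \<ge> k \<Longrightarrow> cyl (ss j) (nn j) \<subseteq> cyl (ss k) (nn k)" for j k
  proof (induction j rule: dec_induct)
    case (step j) then show ?case using sub[of j] by blast
  qed auto
  define t where "t i = ss (Suc i) i" for i
  have tin: "t \<in> cyl (ss k) (nn k)" for k
    unfolding cyl_def
  proof (intro CollectI allI impI)
    fix i assume i: "i < nn k"
    show "t i = ss k i"
    proof (cases "Suc i \<ge> k")
      case True
      then have "ss (Suc i) \<in> cyl (ss k) (nn k)" using subg cyl_self by blast
      then show ?thesis using i by (simp add: t_def cyl_def)
    next
      case False
      then have "ss k \<in> cyl (ss (Suc i)) (nn (Suc i))" using subg[of "Suc i" k] cyl_self by auto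
      moreover have "i < nn (Suc i)" using nnk[of "Suc i"] by simp
      ultimately show ?thesis by (simp add: t_def cyl_def)
    qed
  qed
  have "t \<in> cyl s n" using tin[of 0] q0 by (simp add: ss_def nn_def)
  moreover have "t \<notin> F k" for k using tin[of "Suc k"] disj[of k] by blast
  ultimately show ?thesis using F(2) by blast
qed

lemma not_meager_UNIV: "\<not> meager (UNIV :: (nat \<Rightarrow> bool) set)"
  using baire_cyl by blast

lemma cyl_limit:
  assumes "\<And>k. nn k \<ge> k" "\<And>k j. k \<le> j \<Longrightarrow> ss j \<in> cyl (ss k) (nn k)"
  shows "(\<lambda>i. ss (Suc i) i) \<in> cyl (ss k) (nn k)"
  unfolding cyl_def
proof (intro CollectI allI impI)
  fix i assume i: "i < nn k"
  show "ss (Suc i) i = ss k i"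
  proof (cases "Suc i \<ge> k")
    case True
    then show ?thesis using i assms(2)[of k "Suc i"] by (simp add: cyl_def)
  next
    case False
    then have "ss k \<in> cyl (ss (Suc i)) (nn (Suc i))" using assms(2)[of "Suc i" k] by auto
    moreover have "i < nn (Suc i)" using assms(1)[of "Suc i"] by simp
    ultimately show ?thesis by (simp add: cyl_def)
  qed
qed

definition flip :: "nat \<Rightarrow> (nat \<Rightarrow> bool) \<Rightarrow> (nat \<Rightarrow> bool)" where
  "flip n t = (\<lambda>i. if i < n then t i else \<not> t i)"

lemma flip_flip[simp]: "flip n (flip n t) = t"
  by (auto simp: flip_def)

lemma flip_vimage_cyl: "flip n -` cyl s m = cyl (flip n s) m"
  by (auto simp: flip_def cyl_def)

lemma ND_flip: "ND S \<Longrightarrow> ND (flip n -` S)"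
  unfolding ND_def
proof (intro allI)
  fix s k assume S: "\<forall>s n. \<exists>s' m. cyl s' m \<subseteq> cyl s n \<and> cyl s' m \<inter> S = {}"
  obtain s' m where sm: "cyl s' m \<subseteq> cyl (flip n s) k" "cyl s' m \<inter> S = {}" using S by blast
  have "cyl (flip n s') m = flip n -` cyl s' m" by (simp add: flip_vimage_cyl)
  also have "\<dots> \<subseteq> flip n -` cyl (flip n s) k" using sm(1) by auto
  also have "\<dots> = cyl s k" by (simp add: flip_vimage_cyl)
  finally show "\<exists>s' m. cyl s' m \<subseteq> cyl s k \<and> cyl s' m \<inter> flip n -` S = {}"
    using sm(2) flip_vimage_cyl[of n s' m] by (intro exI[of _ "flip n s'"] exI[of _ m]) auto
qed

lemma meager_flip: "meager M \<Longrightarrow> meager (flip n -` M)"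
proof -
  assume "meager M"
  then obtain F :: "nat \<Rightarrow> _" where F: "\<forall>k. ND (F k)" "M \<subseteq> (\<Union>k. F k)"
    unfolding meager_ND by (elim exE conjE)
  have a: "\<forall>k. ND (flip n -` F k)" using ND_flip F(1) by simp
  have b: "flip n -` M \<subseteq> (\<Union>k. flip n -` F k)"
  proof
    fix x assume "x \<in> flip n -` M"
    then have "flip n x \<in> M" by simp
    then obtain k where "flip n x \<in> F k" using F(2) by blast
    then show "x \<in> (\<Union>k. flip n -` F k)" by blast
  qed
  show ?thesis unfolding meager_ND by (rule exI[of _ "\<lambda>k. flip n -` F k"]) (use a b in simp)
qed

lemma ideal_meager:
  assumes I: "ideal_on_nat I" and B: "has_baire_property (ideal_as_cantor I)"
  shows "meager (ideal_as_cantor I)"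
proof -
  obtain U M where UM: "open U" "meager M" "ideal_as_cantor I = (U - M) \<union> (M - U)"
    using B unfolding has_baire_property_def by blast
  show ?thesis
  proof (cases "U = {}")
    case True
    then have "ideal_as_cantor I \<subseteq> M" using UM(3) by simp
    then show ?thesis using UM(2) meager_subset by blast
  next
    case False
    then obtain x where "x \<in> U" by auto
    then obtain n where n: "cyl x n \<subseteq> U" using open_contains_cyl UM(1) by blast
    have "meager (M \<union> flip n -` M)" using meager_Un meager_flip UM(2) by blast
    then obtain t where t: "t \<in> cyl x n" "t \<notin> M \<union> flip n -` M" using baire_cyl by blast
    have "t \<in> ideal_as_cantor I" using t n UM(3) by auto
    then have t1: "{i. t i} \<in> I" by (simp add: ideal_as_cantor_def)
    have "flip n t \<in> cyl x n" using t(1) by (simp add: cyl_def flip_def)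
    then have "flip n t \<in> ideal_as_cantor I" using t n UM(3) by auto
    then have t2: "{i. flip n t i} \<in> I" by (simp add: ideal_as_cantor_def)
    have t3: "{..<n} \<in> I" using I by (simp add: ideal_on_nat_def)
    have "{i. t i} \<union> {i. flip n t i} \<union> {..<n} = UNIV" by (auto simp: flip_def)
    moreover have "{i. t i} \<union> {i. flip n t i} \<union> {..<n} \<in> I"
      using I t1 t2 t3 unfolding ideal_on_nat_def by blast
    ultimately have False using I by (simp add: ideal_on_nat_def)
    then show ?thesis ..
  qed
qed

definition Pat :: "nat \<Rightarrow> (nat \<Rightarrow> bool) set" where
  "Pat n = {s. \<forall>i\<ge>n. \<not> s i}"

lemma finite_Pat: "finite (Pat n)"
proof -
  have "Pat n \<subseteq> (\<lambda>A i. i \<in> A) ` Pow {..<n}"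
  proof
    fix s assume "s \<in> Pat n"
    then have "s = (\<lambda>i. i \<in> {i. s i})" "{i. s i} \<in> Pow {..<n}"
      by (auto simp: Pat_def not_less[symmetric])
    then show "s \<in> (\<lambda>A i. i \<in> A) ` Pow {..<n}" by blast
  qed
  then show ?thesis by (rule finite_subset) simp
qed

lemma ideal_blocks:
  assumes I: "ideal_on_nat I" and Mg: "meager (ideal_as_cantor I)"
  shows "\<exists>b. strict_mono b \<and> (\<forall>X. infinite {k. {b k..<b (Suc k)} \<subseteq> X} \<longrightarrow> X \<notin> I)"
proof -
  obtain F :: "nat \<Rightarrow> _" where F: "\<And>k. ND (F k)" "ideal_as_cantor I \<subseteq> (\<Union>k. F k)"
    using Mg unfolding meager_ND by blast
  define G where "G k = (\<Union>i\<in>{..k}. F i)" for k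
  have NDG: "ND (G k)" for k
  proof (induction k)
    case 0 then show ?case using F(1) by (simp add: G_def)
  next
    case (Suc k)
    have "G (Suc k) = F (Suc k) \<union> G k" by (simp add: G_def atMost_Suc)
    then show ?case using Suc ND_Un F(1) by simp
  qed
  have "\<forall>k n s. \<exists>p. snd p > n \<and> cyl (fst p) (snd p) \<subseteq> cyl s n \<and> cyl (fst p) (snd p) \<inter> G k = {}"
  proof (intro allI)
    fix k n s
    obtain s' m where "m > n" "cyl s' m \<subseteq> cyl s n" "cyl s' m \<inter> G k = {}"
      using ND_step[OF NDG] by blast
    then show "\<exists>p. snd p > n \<and> cyl (fst p) (snd p) \<subseteq> cyl s n \<and> cyl (fst p) (snd p) \<inter> G k = {}"
      by (intro exI[of _ "(s', m)"]) simp
  qed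
  note ex = this
  define ext where "ext k n s = (SOME p. snd p > n \<and> cyl (fst p) (snd p) \<subseteq> cyl s n \<and> cyl (fst p) (snd p) \<inter> G k = {})" for k n s
  have ext: "snd (ext k n s) > n \<and> cyl (fst (ext k n s)) (snd (ext k n s)) \<subseteq> cyl s n
      \<and> cyl (fst (ext k n s)) (snd (ext k n s)) \<inter> G k = {}" for k n s
    unfolding ext_def by (rule someI_ex) (use ex in blast)
  define L where "L k n = Max (insert (Suc n) ((\<lambda>s. snd (ext k n s)) ` Pat n))" for k n
  have L1: "L k n > n" for k n
  proof -
    have "Suc n \<le> L k n" unfolding L_def by (rule Max_ge) (simp_all add: finite_Pat)
    then show ?thesis by simp
  qed
  have L2: "s \<in> Pat n \<Longrightarrow> snd (ext k n s) \<le> L k n" for k n s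
    unfolding L_def by (rule Max_ge) (simp_all add: finite_Pat)
  define b where "b k = rec_nat 0 (\<lambda>k m. L k m) k" for k
  have b0: "b 0 = 0" and bS: "b (Suc k) = L k (b k)" for k by (simp_all add: b_def)
  have bSuc: "b k < b (Suc k)" for k using L1 bS by simp
  have smb: "strict_mono b" using bSuc by (simp add: strict_mono_Suc_iff)
  have bk: "b k \<ge> k" for k by (induction k) (use bSuc in \<open>auto simp: Suc_le_eq intro: le_less_trans\<close>)
  have bmono: "k \<le> j \<Longrightarrow> b k \<le> b j" for k j using smb strict_mono_less_eq by blast
  define ux where "ux k s = fst (ext k (b k) s)" for k s
  have ux: "s \<in> Pat (b k) \<Longrightarrow> cyl (ux k s) (b (Suc k)) \<subseteq> cyl s (b k) \<and> cyl (ux k s) (b (Suc k)) \<inter> G k = {}" for k s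
  proof -
    assume s: "s \<in> Pat (b k)"
    have c: "cyl (ux k s) (b (Suc k)) \<subseteq> cyl (ux k s) (snd (ext k (b k) s))"
      using L2[OF s] bS by (intro cyl_mono) auto
    have e: "cyl (ux k s) (snd (ext k (b k) s)) \<subseteq> cyl s (b k)"
      "cyl (ux k s) (snd (ext k (b k) s)) \<inter> G k = {}"
      using ext[where k=k and n="b k" and s=s] unfolding ux_def by simp_all
    have "cyl (ux k s) (b (Suc k)) \<inter> G k \<subseteq> cyl (ux k s) (snd (ext k (b k) s)) \<inter> G k"
      using c by (rule Int_mono) simp
    then show ?thesis using c e subset_trans[OF c e(1)] by simp
  qed
  have main: "X \<notin> I" if J: "infinite {k. {b k..<b (Suc k)} \<subseteq> X}" for X
  proof
    assume XI: "X \<in> I"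
    define J where "J = {k. {b k..<b (Suc k)} \<subseteq> X}"
    define y where "y k = rec_nat (\<lambda>_. False)
       (\<lambda>k yk. if k \<in> J then (\<lambda>i. i < b (Suc k) \<and> ux k yk i) else yk) k" for k
    have y0: "y 0 = (\<lambda>_. False)"
      and yS: "y (Suc k) = (if k \<in> J then (\<lambda>i. i < b (Suc k) \<and> ux k (y k) i) else y k)" for k
      by (simp_all add: y_def)
    have yP: "y k \<in> Pat (b k)" for k
    proof (induction k)
      case 0 then show ?case by (simp add: y0 Pat_def)
    next
      case (Suc k) then show ?case using bSuc[of k] by (auto simp: yS Pat_def)
    qed
    have uxin: "ux k (y k) \<in> cyl (y k) (b k)" for k using ux[OF yP[of k]] cyl_self by blast
    have ystep: "y (Suc k) \<in> cyl (y k) (b k)" for k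
      using uxin[of k] bSuc[of k] by (auto simp: yS cyl_def)
    have ychain: "k \<le> j \<Longrightarrow> y j \<in> cyl (y k) (b k)" for k j
    proof (induction j rule: dec_induct)
      case base then show ?case by simp
    next
      case (step j)
      then show ?case using ystep[of j] bmono[of k j] by (auto simp: cyl_def)
    qed
    have yX: "y k i \<Longrightarrow> i \<in> X" for k i
    proof (induction k)
      case 0 then show ?case by (simp add: y0)
    next
      case (Suc k)
      show ?case
      proof (cases "k \<in> J")
        case True
        then have h: "i < b (Suc k)" "ux k (y k) i" using Suc.prems by (auto simp: yS)
        show ?thesis
        proof (cases "i < b k")
          case True
          then have "y k i" using h uxin[of k] by (auto simp: cyl_def)
          then show ?thesis using Suc.IH by blast
        next
          case False
          then show ?thesis using h \<open>k \<in> J\<close> by (auto simp: J_def)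
        qed
      next
        case False then show ?thesis using Suc by (simp add: yS)
      qed
    qed
    define Y where "Y = (\<lambda>i. y (Suc i) i)"
    have Yin: "Y \<in> cyl (y k) (b k)" for k
      unfolding Y_def by (rule cyl_limit) (use bk ychain in auto)
    have "{i. Y i} \<subseteq> X" using yX by (auto simp: Y_def)
    then have "{i. Y i} \<in> I" using I XI unfolding ideal_on_nat_def by blast
    then have "Y \<in> ideal_as_cantor I" by (simp add: ideal_as_cantor_def)
    then obtain i where i: "Y \<in> F i" using F(2) by blast
    obtain k where k: "k \<in> J" "k \<ge> i" using J unfolding J_def[symmetric]
      using infinite_nat_iff_unbounded_le by blast
    have "y (Suc k) \<in> cyl (ux k (y k)) (b (Suc k))"
      using k(1) by (simp add: yS cyl_def)
    then have "Y \<in> cyl (ux k (y k)) (b (Suc k))"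
      using Yin[of "Suc k"] by (auto simp: cyl_def)
    then have "Y \<notin> G k" using ux[OF yP[of k]] by blast
    moreover have "Y \<in> G k" using i k(2) by (auto simp: G_def)
    ultimately show False by blast
  qed
  show ?thesis using smb main by blast
qed

lemma meager_ND_single: "ND S \<Longrightarrow> meager S"
  unfolding meager_ND by (rule exI[of _ "\<lambda>_. S"]) simp

lemma sum_if_scale:
  fixes x :: "nat \<Rightarrow> 'a::real_vector"
  shows "(\<Sum>i\<le>n. (if t i then 1 else 0) *\<^sub>R x i) = sum x {i\<in>{..n}. t i}"
proof -
  have "(\<Sum>i\<le>n. (if t i then 1 else 0) *\<^sub>R x i) = (\<Sum>i\<le>n. if t i then x i else 0)"
    by (rule sum.cong) auto
  also have "\<dots> = sum x {i\<in>{..n}. t i}" by (rule sum.inter_filter[symmetric]) simp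
  finally show ?thesis .
qed

lemma strict_mono_ge: "strict_mono (b::nat \<Rightarrow> nat) \<Longrightarrow> b k \<ge> k"
proof (induction k)
  case (Suc k)
  have "b k < b (Suc k)" using Suc.prems by (simp add: strict_mono_def)
  then show ?case using Suc by simp
qed simp

lemma A_meager:
  fixes x :: "nat \<Rightarrow> 'a::real_normed_vector"
  assumes I: "ideal_on_nat I" and b: "strict_mono b"
    and blk: "\<forall>X. infinite {k. {b k..<b (Suc k)} \<subseteq> X} \<longrightarrow> X \<notin> I"
    and unb: "\<forall>C N. \<exists>F. finite F \<and> F \<subseteq> {N..} \<and> norm (sum x F) > C"
  shows "meager (A_set I x)"
proof -
  define S where "S t n = (\<Sum>i\<le>n. (if t i then 1 else 0) *\<^sub>R x i)" for t n
  define B where "B M k0 = {t. \<forall>k\<ge>k0. \<exists>n\<in>{b k..<b (Suc k)}. norm (S t n) \<le> real M}" for M k0 :: nat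
  have bk: "b k \<ge> k" for k using b by (rule strict_mono_ge)
  have bS: "b k < b (Suc k)" for k using b by (simp add: strict_mono_def)
  have NDB: "ND (B M k0)" for M k0
    unfolding ND_def
  proof (intro allI)
    fix s n0
    define a where "a = sum x {i. i < n0 \<and> s i}"
    obtain F where F: "finite F" "F \<subseteq> {n0..}" "norm (sum x F) > real M + norm a"
      using unb by blast
    define q where "q = Suc (Max (insert n0 F))"
    have qF: "i < q" if "i \<in> F" for i
    proof -
      have "i \<le> Max (insert n0 F)" by (rule Max_ge) (use F(1) that in simp_all)
      then show ?thesis by (simp add: q_def)
    qed
    have qn: "n0 < q"
    proof -
      have "n0 \<le> Max (insert n0 F)" by (rule Max_ge) (use F(1) in simp_all)
      then show ?thesis by (simp add: q_def)
    qed
    define k where "k = max k0 q"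
    have kq: "q \<le> b k" using bk[of k] by (simp add: k_def)
    have kk0: "k0 \<le> k" by (simp add: k_def)
    define s' where "s' i = (if i < n0 then s i else i \<in> F)" for i
    have c1: "cyl s' (b (Suc k)) \<subseteq> cyl s n0"
    proof
      fix t assume t: "t \<in> cyl s' (b (Suc k))"
      have "n0 < b (Suc k)" using qn kq bS[of k] by simp
      then show "t \<in> cyl s n0" using t by (simp add: cyl_def s'_def)
    qed
    have c2: "t \<notin> B M k0" if t: "t \<in> cyl s' (b (Suc k))" for t
    proof
      assume "t \<in> B M k0"
      then have "\<exists>n\<in>{b k..<b (Suc k)}. norm (S t n) \<le> real M"
        using kk0 unfolding B_def by blast
      then obtain n where n0: "n \<in> {b k..<b (Suc k)}" "norm (S t n) \<le> real M"
        by blast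
      then have n: "b k \<le> n" "n < b (Suc k)" "norm (S t n) \<le> real M" by simp_all
      have teq: "t i = s' i" if "i \<le> n" for i
        using t that n(2) by (simp add: cyl_def)
      have set: "{i\<in>{..n}. t i} = {i. i < n0 \<and> s i} \<union> F"
      proof (rule set_eqI)
        fix i
        show "i \<in> {i\<in>{..n}. t i} \<longleftrightarrow> i \<in> {i. i < n0 \<and> s i} \<union> F"
        proof
          assume "i \<in> {i\<in>{..n}. t i}"
          then have "i \<le> n" "t i" by auto
          then show "i \<in> {i. i < n0 \<and> s i} \<union> F" using teq[of i] by (auto simp: s'_def split: if_splits)
        next
          assume h: "i \<in> {i. i < n0 \<and> s i} \<union> F"
          have "n0 \<le> n" using qn kq n(1) by simp
          show "i \<in> {i\<in>{..n}. t i}"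
          proof (cases "i \<in> F")
            case True
            then have "i \<le> n" "n0 \<le> i" using qF[of i] kq n(1) F(2) by auto
            then show ?thesis using teq[of i] True by (simp add: s'_def)
          next
            case False
            then have "i < n0" "s i" using h by auto
            then show ?thesis using teq[of i] \<open>n0 \<le> n\<close> by (simp add: s'_def)
          qed
        qed
      qed
      have disj: "{i. i < n0 \<and> s i} \<inter> F = {}" using F(2) by auto
      have "S t n = sum x ({i. i < n0 \<and> s i} \<union> F)"
        unfolding S_def sum_if_scale set ..
      also have "\<dots> = a + sum x F" unfolding a_def
        by (rule sum.union_disjoint) (use F(1) disj in simp_all)
      finally have Stn: "S t n = a + sum x F" .
      have "norm (sum x F) \<le> norm (a + sum x F) + norm a"
        using norm_triangle_ineq4[of "a + sum x F" a] by simp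
      then show False using Stn n(3) F(3) by simp
    qed
    show "\<exists>s'' m. cyl s'' m \<subseteq> cyl s n0 \<and> cyl s'' m \<inter> B M k0 = {}"
      using c1 c2 by (intro exI[of _ s'] exI[of _ "b (Suc k)"]) blast
  qed
  have sub: "A_set I x \<subseteq> (\<Union>M. \<Union>k0. B M k0)"
  proof
    fix t assume "t \<in> A_set I x"
    then obtain M where M: "M > 0" "{n. norm (S t n) > M} \<in> I"
      unfolding A_set_def I_bounded_def S_def by blast
    define E where "E = {n. norm (S t n) > M}"
    have "finite {k. {b k..<b (Suc k)} \<subseteq> E}" using blk M(2) unfolding E_def by blast
    then obtain k0 where k0: "{k. {b k..<b (Suc k)} \<subseteq> E} \<subseteq> {..<k0}"
      using finite_nat_bounded by blast
    define N where "N = nat \<lceil>M\<rceil>"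
    have MN: "M \<le> real N" unfolding N_def by linarith
    have "t \<in> B N k0" unfolding B_def
    proof (intro CollectI allI impI)
      fix k assume "k0 \<le> k"
      then have "\<not> {b k..<b (Suc k)} \<subseteq> E" using k0 by auto
      then obtain n where "n \<in> {b k..<b (Suc k)}" "n \<notin> E" by blast
      then show "\<exists>n\<in>{b k..<b (Suc k)}. norm (S t n) \<le> real N"
        using MN unfolding E_def by (intro bexI[of _ n]) auto
    qed
    then show "t \<in> (\<Union>M. \<Union>k0. B M k0)" by blast
  qed
  have "meager (\<Union>M. \<Union>k0. B M k0)"
    by (intro meager_UN meager_ND_single NDB)
  then show ?thesis using sub by (rule meager_subset)
qed

lemma cube01:
  fixes y :: "nat \<Rightarrow> 'a::real_normed_vector"
  assumes "finite K"
  shows "\<forall>z (a::nat \<Rightarrow> real). (\<forall>k\<in>K. 0 \<le> a k \<and> a k \<le> 1) \<longrightarrow>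
          (\<exists>K'\<subseteq>K. norm (z + (\<Sum>k\<in>K. a k *\<^sub>R y k)) \<le> norm (z + sum y K'))"
  using assms
proof (induction K rule: finite_induct)
  case empty
  show ?case by (intro allI impI exI[of _ "{}"]) simp
next
  case (insert j K0)
  show ?case
  proof (intro allI impI)
    fix z and a :: "nat \<Rightarrow> real" assume a: "\<forall>k\<in>insert j K0. 0 \<le> a k \<and> a k \<le> 1"
    define R where "R = (\<Sum>k\<in>K0. a k *\<^sub>R y k)"
    have aK0: "\<forall>k\<in>K0. 0 \<le> a k \<and> a k \<le> 1" using a by simp
    have aj: "0 \<le> a j" "a j \<le> 1" using a by simp_all
    obtain K2 where K2: "K2 \<subseteq> K0" "norm (z + y j + R) \<le> norm (z + y j + sum y K2)"
      using insert.IH aK0 unfolding R_def by blast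
    obtain K1 where K1: "K1 \<subseteq> K0" "norm (z + R) \<le> norm (z + sum y K1)"
      using insert.IH aK0 unfolding R_def by blast
    have sumins: "(\<Sum>k\<in>insert j K0. a k *\<^sub>R y k) = a j *\<^sub>R y j + R"
      unfolding R_def using insert.hyps by simp
    have eq: "z + (a j *\<^sub>R y j + R) = a j *\<^sub>R (z + y j + R) + (1 - a j) *\<^sub>R (z + R)"
      by (simp add: algebra_simps)
    have "norm (z + (a j *\<^sub>R y j + R)) \<le> norm (a j *\<^sub>R (z + y j + R)) + norm ((1 - a j) *\<^sub>R (z + R))"
      unfolding eq by (rule norm_triangle_ineq)
    also have "\<dots> = a j * norm (z + y j + R) + (1 - a j) * norm (z + R)"
      using aj by simp
    also have "\<dots> \<le> a j * norm (z + y j + sum y K2) + (1 - a j) * norm (z + sum y K1)"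
      using aj K1(2) K2(2) by (intro add_mono mult_left_mono) simp_all
    finally have main: "norm (z + (a j *\<^sub>R y j + R)) \<le>
        a j * norm (z + y j + sum y K2) + (1 - a j) * norm (z + sum y K1)" .
    have jK2: "j \<notin> K2" using K2(1) insert.hyps by blast
    have fK2: "finite K2" using K2(1) insert.hyps finite_subset by blast
    have s2: "z + sum y (insert j K2) = z + y j + sum y K2"
      using jK2 fK2 by (simp add: add.assoc)
    show "\<exists>K'\<subseteq>insert j K0. norm (z + (\<Sum>k\<in>insert j K0. a k *\<^sub>R y k)) \<le> norm (z + sum y K')"
    proof (cases "norm (z + sum y K1) \<le> norm (z + y j + sum y K2)")
      case True
      have "a j * norm (z + y j + sum y K2) + (1 - a j) * norm (z + sum y K1) \<le> norm (z + y j + sum y K2)"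
      proof -
        have "(1 - a j) * norm (z + sum y K1) \<le> (1 - a j) * norm (z + y j + sum y K2)"
          using True aj by (intro mult_left_mono) simp_all
        moreover have "a j * norm (z + y j + sum y K2) + (1 - a j) * norm (z + y j + sum y K2) = norm (z + y j + sum y K2)"
          by (simp add: algebra_simps)
        ultimately show ?thesis by linarith
      qed
      note ineq = this
      have e2: "norm (z + sum y (insert j K2)) = norm (z + y j + sum y K2)" by (simp only: s2)
      have "norm (z + (\<Sum>k\<in>insert j K0. a k *\<^sub>R y k)) \<le> norm (z + sum y (insert j K2))"
        unfolding sumins using main e2 ineq by linarith
      moreover have "insert j K2 \<subseteq> insert j K0" using K2(1) by blast
      ultimately show ?thesis by blast
    next
      case False
      have "a j * norm (z + y j + sum y K2) + (1 - a j) * norm (z + sum y K1) \<le> norm (z + sum y K1)"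
      proof -
        have "a j * norm (z + y j + sum y K2) \<le> a j * norm (z + sum y K1)"
          using False aj by (intro mult_left_mono) simp_all
        moreover have "a j * norm (z + sum y K1) + (1 - a j) * norm (z + sum y K1) = norm (z + sum y K1)"
          by (simp add: algebra_simps)
        ultimately show ?thesis by linarith
      qed
      then show ?thesis using main sumins K1(1)
        by (intro exI[of _ K1]) auto
    qed
  qed
qed

lemma cube_bound:
  fixes y :: "nat \<Rightarrow> 'a::real_normed_vector"
  assumes C: "\<forall>K. finite K \<longrightarrow> norm (sum y K) \<le> C" and K: "finite K"
    and a: "\<forall>k\<in>K. \<bar>a k\<bar> \<le> r" and r: "r \<ge> 0"
  shows "norm (\<Sum>k\<in>K. a k *\<^sub>R y k) \<le> 2 * C * r"
proof -
  have C0: "C \<ge> 0" using C[rule_format, of "{}"] by simp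
  show ?thesis
  proof (cases "r = 0")
    case True
    then have "\<forall>k\<in>K. a k = 0" using a by auto
    then have "(\<Sum>k\<in>K. a k *\<^sub>R y k) = 0" by simp
    then show ?thesis using True by simp
  next
    case False
    then have rp: "r > 0" using r by simp
    define p where "p k = max (a k / r) 0" for k
    define m where "m k = max (- (a k / r)) 0" for k
    have p01: "\<forall>k\<in>K. 0 \<le> p k \<and> p k \<le> 1"
    proof
      fix k assume "k \<in> K"
      then have "\<bar>a k\<bar> \<le> r" using a by simp
      then have "a k / r \<le> 1" using rp by (simp add: divide_le_eq_1 abs_le_iff)
      then show "0 \<le> p k \<and> p k \<le> 1" by (simp add: p_def)
    qed
    have m01: "\<forall>k\<in>K. 0 \<le> m k \<and> m k \<le> 1"
    proof
      fix k assume "k \<in> K"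
      then have "\<bar>a k\<bar> \<le> r" using a by simp
      then have "- (a k / r) \<le> 1" using rp by (simp add: abs_le_iff field_simps)
      then show "0 \<le> m k \<and> m k \<le> 1" by (simp add: m_def)
    qed
    have ak: "a k = r * (p k - m k)" for k
      using rp by (simp add: p_def m_def max_def field_simps)
    have "(\<Sum>k\<in>K. a k *\<^sub>R y k) = (\<Sum>k\<in>K. r *\<^sub>R (p k *\<^sub>R y k - m k *\<^sub>R y k))"
      by (rule sum.cong) (simp_all add: ak algebra_simps)
    also have "\<dots> = r *\<^sub>R ((\<Sum>k\<in>K. p k *\<^sub>R y k) - (\<Sum>k\<in>K. m k *\<^sub>R y k))"
      by (simp add: scaleR_sum_right[symmetric] sum_subtractf)
    finally have eq: "(\<Sum>k\<in>K. a k *\<^sub>R y k) = r *\<^sub>R ((\<Sum>k\<in>K. p k *\<^sub>R y k) - (\<Sum>k\<in>K. m k *\<^sub>R y k))" .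
    obtain K1 where "K1 \<subseteq> K" "norm (0 + (\<Sum>k\<in>K. p k *\<^sub>R y k)) \<le> norm (0 + sum y K1)"
      using cube01[OF K, of y] p01 by blast
    then have P: "norm (\<Sum>k\<in>K. p k *\<^sub>R y k) \<le> C"
      using C K finite_subset[of K1 K] by fastforce
    obtain K2 where "K2 \<subseteq> K" "norm (0 + (\<Sum>k\<in>K. m k *\<^sub>R y k)) \<le> norm (0 + sum y K2)"
      using cube01[OF K, of y] m01 by blast
    then have M: "norm (\<Sum>k\<in>K. m k *\<^sub>R y k) \<le> C"
      using C K finite_subset[of K2 K] by fastforce
    have "norm ((\<Sum>k\<in>K. p k *\<^sub>R y k) - (\<Sum>k\<in>K. m k *\<^sub>R y k)) \<le> C + C"
      using norm_triangle_ineq4[of "\<Sum>k\<in>K. p k *\<^sub>R y k" "\<Sum>k\<in>K. m k *\<^sub>R y k"] P M by simp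
    then have "r * norm ((\<Sum>k\<in>K. p k *\<^sub>R y k) - (\<Sum>k\<in>K. m k *\<^sub>R y k)) \<le> r * (C + C)"
      using rp by (intro mult_left_mono) simp_all
    moreover have "norm (r *\<^sub>R ((\<Sum>k\<in>K. p k *\<^sub>R y k) - (\<Sum>k\<in>K. m k *\<^sub>R y k)))
        = r * norm ((\<Sum>k\<in>K. p k *\<^sub>R y k) - (\<Sum>k\<in>K. m k *\<^sub>R y k))"
      using rp by simp
    ultimately show ?thesis unfolding eq by (simp add: algebra_simps)
  qed
qed

lemma ev_point:
  fixes y :: "nat \<Rightarrow> 'a::real_normed_vector"
  assumes C: "\<forall>K. finite K \<longrightarrow> norm (sum y K) \<le> C" and eta: "\<eta> > 0"
  shows "eventually (\<lambda>k. norm e - \<eta> \<le> norm (e + l *\<^sub>R y k)) sequentially"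
proof (rule ccontr)
  assume "\<not> eventually (\<lambda>k. norm e - \<eta> \<le> norm (e + l *\<^sub>R y k)) sequentially"
  then have "frequently (\<lambda>k. norm (e + l *\<^sub>R y k) < norm e - \<eta>) sequentially"
    by (simp add: not_eventually not_le)
  then have inf: "infinite {k. norm (e + l *\<^sub>R y k) < norm e - \<eta>}"
    unfolding cofinite_eq_sequentially[symmetric] frequently_cofinite .
  have C0: "C \<ge> 0" using C[rule_format, of "{}"] by simp
  obtain N :: nat where N: "\<bar>l\<bar> * C / \<eta> < real N" using reals_Archimedean2 by blast
  have "0 \<le> \<bar>l\<bar> * C / \<eta>" using C0 eta by simp
  then have Npos: "N > 0" using N by linarith
  have NC: "\<bar>l\<bar> * C < real N * \<eta>" using N eta by (simp add: field_simps)
  obtain S where S: "finite S" "card S = N" "S \<subseteq> {k. norm (e + l *\<^sub>R y k) < norm e - \<eta>}"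
    using infinite_arbitrarily_large[OF inf] by blast
  have Sne: "S \<noteq> {}" using S(2) Npos by auto
  have sumeq: "(\<Sum>k\<in>S. e + l *\<^sub>R y k) = real N *\<^sub>R e + l *\<^sub>R sum y S"
    using S(2) by (simp add: sum.distrib scaleR_sum_right sum_constant_scaleR)
  have "norm (\<Sum>k\<in>S. e + l *\<^sub>R y k) \<le> (\<Sum>k\<in>S. norm (e + l *\<^sub>R y k))"
    by (rule norm_sum)
  also have "\<dots> < (\<Sum>k\<in>S. norm e - \<eta>)"
    by (rule sum_strict_mono) (use S Sne in auto)
  also have "\<dots> = real N * (norm e - \<eta>)" using S(2) by simp
  finally have up: "norm (real N *\<^sub>R e + l *\<^sub>R sum y S) < real N * (norm e - \<eta>)"
    using sumeq by simp
  have "norm (real N *\<^sub>R e) \<le> norm (real N *\<^sub>R e + l *\<^sub>R sum y S) + norm (l *\<^sub>R sum y S)"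
    using norm_triangle_ineq4[of "real N *\<^sub>R e + l *\<^sub>R sum y S" "l *\<^sub>R sum y S"] by simp
  moreover have "norm (l *\<^sub>R sum y S) \<le> \<bar>l\<bar> * C"
    using C S(1) by (simp add: mult_left_mono)
  ultimately have "real N * norm e \<le> norm (real N *\<^sub>R e + l *\<^sub>R sum y S) + \<bar>l\<bar> * C"
    by simp
  then show False using up NC by (simp add: algebra_simps)
qed

lemma ev_compact:
  fixes y :: "nat \<Rightarrow> 'a::real_normed_vector"
  assumes C: "\<forall>K. finite K \<longrightarrow> norm (sum y K) \<le> C" and eta: "\<eta> > 0"
    and Kc: "compact (Kc :: ('a \<times> real) set)"
  shows "eventually (\<lambda>k. \<forall>p\<in>Kc. norm (fst p) - \<eta> \<le> norm (fst p + snd p *\<^sub>R y k)) sequentially"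
proof -
  have C0: "C \<ge> 0" using C[rule_format, of "{}"] by simp
  have yC: "norm (y k) \<le> C" for k using C[rule_format, of "{k}"] by simp
  define r where "r = \<eta> / (2 * (2 + C))"
  have rp: "r > 0" using eta C0 by (simp add: r_def)
  have r2: "r * (2 + C) = \<eta> / 2" using C0 by (simp add: r_def field_simps)
  obtain T where T: "T \<subseteq> Kc" "finite T" "Kc \<subseteq> (\<Union>p\<in>T. ball p r)"
    using compactE_image[OF Kc, of Kc "\<lambda>p. ball p r"] rp by (metis open_ball centre_in_ball UN_I subsetI)
  have "\<forall>p\<in>T. eventually (\<lambda>k. norm (fst p) - \<eta>/2 \<le> norm (fst p + snd p *\<^sub>R y k)) sequentially"
    using ev_point[OF C] eta by simp
  then have ev: "eventually (\<lambda>k. \<forall>p\<in>T. norm (fst p) - \<eta>/2 \<le> norm (fst p + snd p *\<^sub>R y k)) sequentially"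
    by (rule eventually_ball_finite[OF T(2)])
  show ?thesis
  proof (rule eventually_mono[OF ev], intro ballI)
    fix k q
    assume H: "\<forall>p\<in>T. norm (fst p) - \<eta>/2 \<le> norm (fst p + snd p *\<^sub>R y k)" and q: "q \<in> Kc"
    obtain p where p: "p \<in> T" "q \<in> ball p r" using T(3) q by blast
    have d: "dist p q < r" using p(2) by simp
    have d1: "norm (fst p - fst q) < r" using dist_fst_le[of p q] d by (simp add: dist_norm)
    have d2: "\<bar>snd p - snd q\<bar> < r" using dist_snd_le[of p q] d by (simp add: dist_real_def)
    have Hp: "norm (fst p) - \<eta>/2 \<le> norm (fst p + snd p *\<^sub>R y k)" using H p(1) by blast
    have decomp: "fst p + snd p *\<^sub>R y k = (fst q + snd q *\<^sub>R y k) + ((fst p - fst q) + (snd p - snd q) *\<^sub>R y k)"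
      by (simp add: algebra_simps)
    have "norm (fst p + snd p *\<^sub>R y k) \<le> norm (fst q + snd q *\<^sub>R y k) + (norm (fst p - fst q) + norm ((snd p - snd q) *\<^sub>R y k))"
      unfolding decomp by (meson norm_triangle_ineq norm_triangle_le add_left_mono order_trans)
    moreover have "norm ((snd p - snd q) *\<^sub>R y k) \<le> r * C"
    proof -
      have "norm ((snd p - snd q) *\<^sub>R y k) = \<bar>snd p - snd q\<bar> * norm (y k)" by simp
      also have "\<dots> \<le> r * C" using d2 yC by (intro mult_mono) simp_all
      finally show ?thesis .
    qed
    moreover have "norm (fst q) \<le> norm (fst p) + r"
      using norm_triangle_sub[of "fst q" "fst p"] d1 by (simp add: norm_minus_commute)
    ultimately have "norm (fst q) - \<eta> \<le> norm (fst q + snd q *\<^sub>R y k)"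
      using Hp d1 r2 by (simp add: algebra_simps)
    then show "norm (fst q) - \<eta> \<le> norm (fst q + snd q *\<^sub>R y k)" .
  qed
qed

lemma geom_half: "(\<Sum>j<q. (1/2::real)^(Suc j)) = 1 - (1/2)^q"
  by (induction q) (simp_all add: algebra_simps)

lemma select_seq:
  fixes y :: "nat \<Rightarrow> 'a::real_normed_vector"
  assumes eps: "\<epsilon> > 0" and yge: "\<forall>k. norm (y k) \<ge> \<epsilon>"
    and C: "\<forall>K. finite K \<longrightarrow> norm (sum y K) \<le> C"
  shows "\<exists>w::nat \<Rightarrow> 'a. (\<forall>K. finite K \<longrightarrow> norm (sum w K) \<le> C) \<and> (\<forall>k. norm (w k) \<ge> \<epsilon>) \<and>
     (\<forall>c. (\<forall>i. \<bar>c i\<bar> \<le> 1) \<longrightarrow> (\<forall>j q. j < q \<longrightarrow> \<bar>c j\<bar> * \<epsilon> \<le> 2 * norm (\<Sum>i<q. c i *\<^sub>R w i) + \<epsilon>/4))"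
proof -
  define \<eta> where "\<eta> j = \<epsilon> / 8 * (1/2)^(Suc j)" for j
  have etap: "\<eta> j > 0" for j using eps by (simp add: \<eta>_def)
  define Kn where "Kn p = (\<lambda>q. fst q + snd q *\<^sub>R y (fst p)) ` (snd p \<times> {-1..1::real})" for p :: "nat \<times> 'a set"
  define good where "good Ks j k = (\<forall>e\<in>Ks. \<forall>l\<in>{-1..1::real}. norm e - \<eta> j \<le> norm (e + l *\<^sub>R y k))" for Ks j k
  have Kn_compact: "compact (Kn p)" if "compact (snd p)" for p
    unfolding Kn_def
    by (rule compact_continuous_image) (use that in \<open>auto intro!: continuous_intros compact_Times\<close>)
  have ex: "\<exists>k'. k' > fst p \<and> good (Kn p) j k'" if "compact (snd p)" for p j
  proof -
    have "compact (Kn p \<times> {-1..1::real})" using Kn_compact[OF that] by (intro compact_Times) auto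
    from ev_compact[OF C etap this]
    have "eventually (\<lambda>k. \<forall>q\<in>Kn p \<times> {-1..1}. norm (fst q) - \<eta> j \<le> norm (fst q + snd q *\<^sub>R y k)) sequentially" .
    then obtain N where N: "\<forall>k\<ge>N. \<forall>q\<in>Kn p \<times> {-1..1}. norm (fst q) - \<eta> j \<le> norm (fst q + snd q *\<^sub>R y k)"
      unfolding eventually_sequentially by blast
    define k' where "k' = max N (Suc (fst p))"
    have "good (Kn p) j k'"
      unfolding good_def
    proof (intro ballI)
      fix e l assume "e \<in> Kn p" "l \<in> {-1..1::real}"
      then have "(e, l) \<in> Kn p \<times> {-1..1}" by simp
      then show "norm e - \<eta> j \<le> norm (e + l *\<^sub>R y k')" using N[rule_format, of k' "(e, l)"] by (simp add: k'_def)
    qed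
    then show ?thesis by (intro exI[of _ k']) (simp add: k'_def)
  qed
  define st where "st j = rec_nat (0, {0}) (\<lambda>j p. (SOME k'. k' > fst p \<and> good (Kn p) (Suc j) k', Kn p)) j" for j
  have st0: "st 0 = (0, {0})" and stS: "st (Suc j) = (SOME k'. k' > fst (st j) \<and> good (Kn (st j)) (Suc j) k', Kn (st j))" for j
    by (simp_all add: st_def)
  define ks where "ks j = fst (st j)" for j
  define Ks where "Ks j = snd (st j)" for j
  define w where "w j = y (ks j)" for j
  have cK: "compact (Ks j)" for j
  proof (induction j)
    case 0 then show ?case by (simp add: Ks_def st0)
  next
    case (Suc j) then show ?case using Kn_compact[of "st j"] by (simp add: Ks_def stS)
  qed
  have KsS: "Ks (Suc j) = (\<lambda>q. fst q + snd q *\<^sub>R w j) ` (Ks j \<times> {-1..1})" for j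
    by (simp add: Ks_def stS Kn_def w_def ks_def)
  have ksgood: "ks (Suc j) > ks j \<and> good (Ks (Suc j)) (Suc j) (ks (Suc j))" for j
  proof -
    have "compact (snd (st j))" using cK[of j] by (simp add: Ks_def)
    from someI_ex[OF ex[OF this, of "Suc j"]]
    show ?thesis by (simp add: ks_def Ks_def stS)
  qed
  have smk: "strict_mono ks" using ksgood by (simp add: strict_mono_Suc_iff)
  have injk: "inj ks" using smk by (rule strict_mono_imp_inj_on)
  have wC: "norm (sum w K) \<le> C" if "finite K" for K
  proof -
    have "sum w K = sum y (ks ` K)" unfolding w_def
      using sum.reindex[of ks K y] injk by (simp add: inj_on_subset)
    then show ?thesis using C that by simp
  qed
  have wge: "norm (w k) \<ge> \<epsilon>" for k using yge by (simp add: w_def)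
  have mem: "(\<Sum>i<j. c i *\<^sub>R w i) \<in> Ks j" if c: "\<forall>i. \<bar>c i\<bar> \<le> 1" for c j
  proof (induction j)
    case 0 then show ?case by (simp add: Ks_def st0)
  next
    case (Suc j)
    have "c j \<in> {-1..1}" using c[rule_format, of j] by (simp add: abs_le_iff)
    then have "((\<Sum>i<j. c i *\<^sub>R w i), c j) \<in> Ks j \<times> {-1..1}" using Suc by simp
    then have "fst ((\<Sum>i<j. c i *\<^sub>R w i), c j) + snd ((\<Sum>i<j. c i *\<^sub>R w i), c j) *\<^sub>R w j \<in> Ks (Suc j)"
      unfolding KsS by (rule imageI)
    then show ?case by simp
  qed
  have stp: "norm (\<Sum>i<j. c i *\<^sub>R w i) \<le> norm (\<Sum>i<Suc j. c i *\<^sub>R w i) + \<eta> j"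
    if c: "\<forall>i. \<bar>c i\<bar> \<le> 1" for c j
  proof (cases j)
    case 0 then show ?thesis using etap[of 0] by simp
  next
    case (Suc j')
    have g: "good (Ks j) j (ks j)" using ksgood[of j'] Suc by simp
    have "c j \<in> {-1..1}" using c[rule_format, of j] by (simp add: abs_le_iff)
    then have "norm (\<Sum>i<j. c i *\<^sub>R w i) - \<eta> j \<le> norm ((\<Sum>i<j. c i *\<^sub>R w i) + c j *\<^sub>R y (ks j))"
      using g mem[OF c, of j] unfolding good_def by blast
    then show ?thesis by (simp add: w_def)
  qed
  have tele: "norm (\<Sum>i<p. c i *\<^sub>R w i) \<le> norm (\<Sum>i<q. c i *\<^sub>R w i) + (\<Sum>j\<in>{p..<q}. \<eta> j)"
    if c: "\<forall>i. \<bar>c i\<bar> \<le> 1" and pq: "p \<le> q" for c p q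
    using pq
  proof (induction q rule: dec_induct)
    case base then show ?case by simp
  next
    case (step q)
    have "(\<Sum>j\<in>{p..<Suc q}. \<eta> j) = (\<Sum>j\<in>{p..<q}. \<eta> j) + \<eta> q" using step.hyps by simp
    then show ?case using step.IH stp[OF c, of q] by linarith
  qed
  have etasum: "(\<Sum>j\<in>{p..<q}. \<eta> j) \<le> \<epsilon> / 8" for p q
  proof -
    have "(\<Sum>j\<in>{p..<q}. \<eta> j) \<le> (\<Sum>j<q. \<eta> j)"
      by (rule sum_mono2) (use etap in \<open>auto simp: less_imp_le\<close>)
    also have "\<dots> = \<epsilon> / 8 * (\<Sum>j<q. (1/2::real)^(Suc j))"
      by (simp add: \<eta>_def sum_distrib_left)
    also have "\<dots> = \<epsilon> / 8 * (1 - (1/2)^q)" by (simp only: geom_half)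
    also have "\<dots> \<le> \<epsilon> / 8" using eps by (simp add: mult_left_le)
    finally show ?thesis .
  qed
  have coef: "\<bar>c j\<bar> * \<epsilon> \<le> 2 * norm (\<Sum>i<q. c i *\<^sub>R w i) + \<epsilon>/4"
    if c: "\<forall>i. \<bar>c i\<bar> \<le> 1" and jq: "j < q" for c j q
  proof -
    have a1: "norm (\<Sum>i<j. c i *\<^sub>R w i) \<le> norm (\<Sum>i<q. c i *\<^sub>R w i) + \<epsilon>/8"
      using tele[OF c, of j q] etasum[of j q] jq by linarith
    have a2: "norm (\<Sum>i<Suc j. c i *\<^sub>R w i) \<le> norm (\<Sum>i<q. c i *\<^sub>R w i) + \<epsilon>/8"
      using tele[OF c, of "Suc j" q] etasum[of "Suc j" q] jq by linarith
    have "c j *\<^sub>R w j = (\<Sum>i<Suc j. c i *\<^sub>R w i) - (\<Sum>i<j. c i *\<^sub>R w i)" by simp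
    then have "norm (c j *\<^sub>R w j) \<le> norm (\<Sum>i<Suc j. c i *\<^sub>R w i) + norm (\<Sum>i<j. c i *\<^sub>R w i)"
      by (metis norm_triangle_ineq4)
    moreover have "\<bar>c j\<bar> * \<epsilon> \<le> norm (c j *\<^sub>R w j)"
      using wge[of j] by (simp add: mult_left_mono)
    ultimately show ?thesis using a1 a2 by linarith
  qed
  have A1: "\<forall>K. finite K \<longrightarrow> norm (sum w K) \<le> C" using wC by simp
  have A2: "\<forall>k. norm (w k) \<ge> \<epsilon>" using wge by simp
  have A3: "\<forall>c. (\<forall>i. \<bar>c i\<bar> \<le> 1) \<longrightarrow> (\<forall>j q. j < q \<longrightarrow> \<bar>c j\<bar> * \<epsilon> \<le> 2 * norm (\<Sum>i<q. c i *\<^sub>R w i) + \<epsilon>/4)"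
    using coef by simp
  have "(\<forall>K. finite K \<longrightarrow> norm (sum w K) \<le> C) \<and> (\<forall>k. norm (w k) \<ge> \<epsilon>) \<and>
     (\<forall>c. (\<forall>i. \<bar>c i\<bar> \<le> 1) \<longrightarrow> (\<forall>j q. j < q \<longrightarrow> \<bar>c j\<bar> * \<epsilon> \<le> 2 * norm (\<Sum>i<q. c i *\<^sub>R w i) + \<epsilon>/4))"
    using A1 A2 A3 by (intro conjI)
  note A = this
  show ?thesis by (rule exI[of _ w]) (rule A)
qed

lemma c0_bdd:
  assumes "f \<in> c0"
  shows "bdd_above (range (\<lambda>n. \<bar>f n\<bar>))"
proof -
  have "convergent f" using assms unfolding c0_def convergent_def by blast
  then have "Bseq f" by (rule convergent_imp_Bseq)
  from BseqD[OF this] obtain K where "0 < K" "\<forall>n. norm (f n) \<le> K" by blast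
  then show ?thesis by (intro bdd_aboveI[of _ K]) auto
qed

lemma sup_norm_ge: "f \<in> c0 \<Longrightarrow> \<bar>f n\<bar> \<le> sup_norm f"
  unfolding sup_norm_def by (rule cSUP_upper) (simp_all add: c0_bdd)

lemma sup_norm_nonneg: "f \<in> c0 \<Longrightarrow> 0 \<le> sup_norm f"
  using sup_norm_ge[of f 0] by simp

lemma sup_norm_big:
  assumes "f \<in> c0" "sup_norm f > 0"
  shows "\<exists>j. \<bar>f j\<bar> > sup_norm f / 2"
proof -
  have "sup_norm f / 2 < sup_norm f" using assms(2) by simp
  then have "sup_norm f / 2 < (SUP n. \<bar>f n\<bar>)" by (simp add: sup_norm_def)
  moreover have "(sup_norm f / 2 < (SUP n. \<bar>f n\<bar>)) = (\<exists>x\<in>UNIV. sup_norm f / 2 < \<bar>f x\<bar>)"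
    by (rule less_cSUP_iff) (simp_all add: c0_bdd[OF assms(1)])
  ultimately show ?thesis by blast
qed

lemma sup_norm_le: "(\<And>n. \<bar>f n\<bar> \<le> B) \<Longrightarrow> sup_norm f \<le> B"
  unfolding sup_norm_def by (rule cSUP_least) auto

lemma BP_core:
  fixes w :: "nat \<Rightarrow> 'a::banach"
  assumes eps: "\<epsilon> > 0" and wC: "\<forall>K. finite K \<longrightarrow> norm (sum w K) \<le> C"
    and coef: "\<forall>c. (\<forall>i. \<bar>c i\<bar> \<le> 1) \<longrightarrow> (\<forall>j q. j < q \<longrightarrow> \<bar>c j\<bar> * \<epsilon> \<le> 2 * norm (\<Sum>i<q. c i *\<^sub>R w i) + \<epsilon>/4)"
  shows "contains_c0 TYPE('a)"
proof -
  have C0: "C \<ge> 0" using wC[rule_format, of "{}"] by simp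
  have summ: "summable (\<lambda>i. f i *\<^sub>R w i)" if f: "f \<in> c0" for f
    unfolding summable_Cauchy
  proof (intro allI impI)
    fix e :: real assume e: "e > 0"
    define r where "r = e / (2 * (C + 1))"
    have rp: "r > 0" using e C0 by (simp add: r_def)
    have "f \<longlonglongrightarrow> 0" using f by (simp add: c0_def)
    then obtain N where N: "\<forall>n\<ge>N. norm (f n - 0) < r" using rp unfolding LIMSEQ_iff by blast
    have "norm (sum (\<lambda>i. f i *\<^sub>R w i) {m..<n}) < e" if m: "m \<ge> N" for m n
    proof -
      have "\<forall>k\<in>{m..<n}. \<bar>f k\<bar> \<le> r" using N m by (auto intro: less_imp_le)
      then have "norm (\<Sum>k\<in>{m..<n}. f k *\<^sub>R w k) \<le> 2 * C * r"
        using cube_bound[OF wC, of "{m..<n}" f r] rp by simp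
      also have "\<dots> < e" using e C0 by (simp add: r_def field_simps)
      finally show ?thesis .
    qed
    then show "\<exists>N. \<forall>m\<ge>N. \<forall>n. norm (sum (\<lambda>i. f i *\<^sub>R w i) {m..<n}) < e" by blast
  qed
  define T where "T f = (\<Sum>i. f i *\<^sub>R w i)" for f :: "nat \<Rightarrow> real"
  have lin: "T (\<lambda>n. a * f n + b * g n) = a *\<^sub>R T f + b *\<^sub>R T g" if "f \<in> c0" "g \<in> c0" for f g a b
  proof -
    have sf: "summable (\<lambda>i. f i *\<^sub>R w i)" and sg: "summable (\<lambda>i. g i *\<^sub>R w i)" using summ that by auto
    have "(\<lambda>i. (a * f i + b * g i) *\<^sub>R w i) = (\<lambda>i. a *\<^sub>R (f i *\<^sub>R w i) + b *\<^sub>R (g i *\<^sub>R w i))"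
      by (simp add: algebra_simps)
    then have "T (\<lambda>n. a * f n + b * g n) = (\<Sum>i. a *\<^sub>R (f i *\<^sub>R w i) + b *\<^sub>R (g i *\<^sub>R w i))"
      by (simp add: T_def)
    also have "\<dots> = (\<Sum>i. a *\<^sub>R (f i *\<^sub>R w i)) + (\<Sum>i. b *\<^sub>R (g i *\<^sub>R w i))"
      by (rule suminf_add[symmetric]) (intro summable_scaleR_right sf, intro summable_scaleR_right sg)
    also have "\<dots> = a *\<^sub>R T f + b *\<^sub>R T g"
      unfolding T_def using suminf_scaleR_right[OF sf, of a] suminf_scaleR_right[OF sg, of b] by simp
    finally show ?thesis .
  qed
  have bounds: "\<epsilon> / 8 * sup_norm f \<le> norm (T f) \<and> norm (T f) \<le> (2 * C + 1) * sup_norm f"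
    if f: "f \<in> c0" for f
  proof -
    define s where "s = sup_norm f"
    have s0: "s \<ge> 0" using sup_norm_nonneg[OF f] by (simp add: s_def)
    have fs: "\<bar>f i\<bar> \<le> s" for i using sup_norm_ge[OF f] by (simp add: s_def)
    define P where "P q = (\<Sum>i<q. f i *\<^sub>R w i)" for q
    have lim: "(\<lambda>q. norm (P q)) \<longlonglongrightarrow> norm (T f)"
      unfolding P_def T_def by (intro tendsto_norm summable_LIMSEQ summ f)
    have up: "norm (P q) \<le> 2 * C * s" for q
      unfolding P_def by (rule cube_bound[OF wC]) (use fs s0 in auto)
    have "norm (T f) \<le> 2 * C * s"
      by (rule Lim_bounded[OF lim, of 0]) (use up in auto)
    then have U: "norm (T f) \<le> (2 * C + 1) * s" using s0 by (simp add: algebra_simps)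
    have L: "\<epsilon> / 8 * s \<le> norm (T f)"
    proof (cases "s = 0")
      case True then show ?thesis by simp
    next
      case False
      then have sp: "s > 0" using s0 by simp
      have "\<exists>j. \<bar>f j\<bar> > sup_norm f / 2" using sup_norm_big[OF f] sp unfolding s_def by blast
      then obtain j where j: "\<bar>f j\<bar> > s / 2" unfolding s_def by blast
      define c where "c i = f i / s" for i
      have c1: "\<forall>i. \<bar>c i\<bar> \<le> 1"
      proof
        fix i
        have "\<bar>c i\<bar> = \<bar>f i\<bar> / s" using sp by (simp add: c_def abs_divide)
        also have "\<dots> \<le> 1" using fs[of i] sp by (simp add: divide_le_eq)
        finally show "\<bar>c i\<bar> \<le> 1" .
      qed
      have bnd: "\<bar>f j\<bar> * \<epsilon> - s * \<epsilon> / 4 \<le> 2 * norm (P q)" if q: "q \<ge> Suc j" for q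
      proof -
        have h: "\<bar>c j\<bar> * \<epsilon> \<le> 2 * norm (\<Sum>i<q. c i *\<^sub>R w i) + \<epsilon>/4"
        proof -
          have "\<forall>j q. j < q \<longrightarrow> \<bar>c j\<bar> * \<epsilon> \<le> 2 * norm (\<Sum>i<q. c i *\<^sub>R w i) + \<epsilon>/4"
            using coef c1 by blast
          then show ?thesis using q by simp
        qed
        have "(\<Sum>i<q. c i *\<^sub>R w i) = (1 / s) *\<^sub>R P q"
          unfolding P_def c_def by (simp add: scaleR_sum_right)
        then have eqn: "norm (\<Sum>i<q. c i *\<^sub>R w i) = norm (P q) / s" using sp by simp
        have cj: "\<bar>c j\<bar> = \<bar>f j\<bar> / s" using sp by (simp add: c_def abs_divide)
        have h2: "\<bar>f j\<bar> / s * \<epsilon> \<le> 2 * (norm (P q) / s) + \<epsilon>/4"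
          using h unfolding eqn cj .
        have "s * (\<bar>f j\<bar> / s * \<epsilon>) \<le> s * (2 * (norm (P q) / s) + \<epsilon>/4)"
          using h2 sp by (intro mult_left_mono) simp_all
        moreover have "s * (\<bar>f j\<bar> / s * \<epsilon>) = \<bar>f j\<bar> * \<epsilon>" using sp by simp
        moreover have "s * (2 * (norm (P q) / s) + \<epsilon>/4) = 2 * norm (P q) + s * \<epsilon> / 4"
          using sp by (simp add: algebra_simps)
        ultimately show ?thesis by linarith
      qed
      have "\<bar>f j\<bar> * \<epsilon> - s * \<epsilon> / 4 \<le> 2 * norm (T f)"
        by (rule Lim_bounded2[of "\<lambda>q. 2 * norm (P q)" _ "Suc j"]) (use lim bnd in \<open>auto intro: tendsto_mult_left\<close>)
      moreover have "s / 2 * \<epsilon> < \<bar>f j\<bar> * \<epsilon>" using j eps by (simp add: mult_strict_right_mono)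
      ultimately show ?thesis by (simp add: algebra_simps)
    qed
    show ?thesis using L U by (simp add: s_def)
  qed
  show ?thesis unfolding contains_c0_def
  proof (rule exI[of _ T], rule exI[of _ "\<epsilon> / 8"], rule exI[of _ "2 * C + 1"], intro conjI)
    show "0 < \<epsilon> / 8" using eps by simp
    show "0 < 2 * C + 1" using C0 by simp
    show "\<forall>f\<in>c0. \<forall>g\<in>c0. \<forall>a b. T (\<lambda>n. a * f n + b * g n) = a *\<^sub>R T f + b *\<^sub>R T g"
      using lin by blast
    show "\<forall>f\<in>c0. \<epsilon> / 8 * sup_norm f \<le> norm (T f) \<and> norm (T f) \<le> (2 * C + 1) * sup_norm f"
      using bounds by blast
  qed
qed

lemma not_uc_eps:
  fixes x :: "nat \<Rightarrow> 'a::banach"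
  assumes "\<not> unconditionally_convergent x"
  shows "\<exists>\<epsilon>>0. \<forall>N. \<exists>F. finite F \<and> F \<subseteq> {N..} \<and> norm (sum x F) \<ge> \<epsilon>"
proof (rule ccontr)
  assume H0: "\<not> (\<exists>\<epsilon>>0. \<forall>N. \<exists>F. finite F \<and> F \<subseteq> {N..} \<and> norm (sum x F) \<ge> \<epsilon>)"
  have H: "\<exists>N. \<forall>F. finite F \<longrightarrow> F \<subseteq> {N..} \<longrightarrow> norm (sum x F) < e" if e: "e > 0" for e
  proof -
    have "\<not> (\<forall>N. \<exists>F. finite F \<and> F \<subseteq> {N..} \<and> norm (sum x F) \<ge> e)" using H0 e by blast
    then obtain N where N: "\<not> (\<exists>F. finite F \<and> F \<subseteq> {N..} \<and> norm (sum x F) \<ge> e)" by blast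
    show ?thesis
    proof (intro exI[of _ N] allI impI)
      fix F assume "finite F" "F \<subseteq> {N..}"
      then show "norm (sum x F) < e" using N by (meson not_le)
    qed
  qed
  have "unconditionally_convergent x"
    unfolding unconditionally_convergent_def
  proof (intro allI impI)
    fix \<sigma> :: "nat \<Rightarrow> nat" assume bij: "bij \<sigma>"
    then have inj: "inj \<sigma>" by (rule bij_is_inj)
    show "summable (x \<circ> \<sigma>)"
      unfolding summable_Cauchy
    proof (intro allI impI)
      fix e :: real assume e: "e > 0"
      obtain N where N: "\<forall>F. finite F \<longrightarrow> F \<subseteq> {N..} \<longrightarrow> norm (sum x F) < e" using H[OF e] by blast
      define N' where "N' = Suc (Max (insert 0 (inv \<sigma> ` {..<N})))"
      have big: "\<sigma> i \<ge> N" if i: "i \<ge> N'" for i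
      proof (rule ccontr)
        assume "\<not> \<sigma> i \<ge> N"
        then have "\<sigma> i \<in> {..<N}" by simp
        then have "inv \<sigma> (\<sigma> i) \<in> insert 0 (inv \<sigma> ` {..<N})" by blast
        then have "inv \<sigma> (\<sigma> i) \<le> Max (insert 0 (inv \<sigma> ` {..<N}))" by (intro Max_ge) simp_all
        then have "i < N'" using inv_f_f[OF inj, of i] by (simp add: N'_def)
        then show False using i by simp
      qed
      have "norm (sum (x \<circ> \<sigma>) {m..<n}) < e" if m: "m \<ge> N'" for m n
      proof -
        have "sum (x \<circ> \<sigma>) {m..<n} = sum x (\<sigma> ` {m..<n})"
          using sum.reindex[of \<sigma> "{m..<n}" x] inj by (simp add: inj_on_subset)
        moreover have "\<sigma> ` {m..<n} \<subseteq> {N..}" using big m by auto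
        ultimately show ?thesis using N by simp
      qed
      then show "\<exists>N. \<forall>m\<ge>N. \<forall>n. norm (sum (x \<circ> \<sigma>) {m..<n}) < e" by blast
    qed
  qed
  then show False using assms by simp
qed

lemma blocks_y:
  fixes x :: "nat \<Rightarrow> 'a::real_normed_vector"
  assumes eps: "\<forall>N. \<exists>F. finite F \<and> F \<subseteq> {N..} \<and> norm (sum x F) \<ge> \<epsilon>"
    and C: "\<forall>F. finite F \<longrightarrow> norm (sum x F) \<le> C"
  shows "\<exists>y::nat \<Rightarrow> 'a. (\<forall>k. norm (y k) \<ge> \<epsilon>) \<and> (\<forall>K. finite K \<longrightarrow> norm (sum y K) \<le> C)"
proof -
  define Fs where "Fs N = (SOME F. finite F \<and> F \<subseteq> {N..} \<and> norm (sum x F) \<ge> \<epsilon>)" for N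
  have Fs: "finite (Fs N) \<and> Fs N \<subseteq> {N..} \<and> norm (sum x (Fs N)) \<ge> \<epsilon>" for N
    unfolding Fs_def by (rule someI_ex) (use eps in blast)
  define Nn where "Nn k = rec_nat 0 (\<lambda>k n. Suc (Max (insert n (Fs n)))) k" for k
  have Nn0: "Nn 0 = 0" and NnS: "Nn (Suc k) = Suc (Max (insert (Nn k) (Fs (Nn k))))" for k
    by (simp_all add: Nn_def)
  define Bk where "Bk k = Fs (Nn k)" for k
  have Bsub: "Bk k \<subseteq> {Nn k..<Nn (Suc k)}" for k
  proof
    fix i assume i: "i \<in> Bk k"
    have "i \<ge> Nn k" using i Fs[of "Nn k"] by (auto simp: Bk_def)
    moreover have "i \<le> Max (insert (Nn k) (Fs (Nn k)))"
      by (rule Max_ge) (use i Fs[of "Nn k"] in \<open>simp_all add: Bk_def\<close>)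
    ultimately show "i \<in> {Nn k..<Nn (Suc k)}" by (simp add: NnS)
  qed
  have NnS_gt: "Nn k < Nn (Suc k)" for k
  proof -
    have "Nn k \<le> Max (insert (Nn k) (Fs (Nn k)))"
      by (rule Max_ge) (use Fs[of "Nn k"] in simp_all)
    then show ?thesis by (simp add: NnS)
  qed
  have smN: "strict_mono Nn" using NnS_gt by (simp add: strict_mono_Suc_iff)
  have disj: "Bk k \<inter> Bk k' = {}" if "k < k'" for k k'
  proof -
    have "Suc k \<le> k'" using that by simp
    then have "Nn (Suc k) \<le> Nn k'" using smN strict_mono_less_eq by blast
    then show ?thesis using Bsub[of k] Bsub[of k'] by fastforce
  qed
  define y where "y k = sum x (Bk k)" for k
  have yge: "norm (y k) \<ge> \<epsilon>" for k using Fs[of "Nn k"] by (simp add: y_def Bk_def)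
  have yC: "norm (sum y K) \<le> C" if K: "finite K" for K :: "nat set"
  proof -
    have "sum x (\<Union>(Bk ` K)) = (\<Sum>k\<in>K. sum x (Bk k))"
    proof (rule sum.UNION_disjoint)
      show "finite K" by (rule K)
      show "\<forall>i\<in>K. finite (Bk i)" using Fs by (simp add: Bk_def)
      show "\<forall>i\<in>K. \<forall>j\<in>K. i \<noteq> j \<longrightarrow> Bk i \<inter> Bk j = {}"
      proof (intro ballI impI)
        fix i j :: nat assume "i \<noteq> j"
        then show "Bk i \<inter> Bk j = {}"
          using disj[of i j] disj[of j i] by (cases "i < j") (auto simp: Int_commute)
      qed
    qed
    moreover have "finite (\<Union>(Bk ` K))" using K Fs by (simp add: Bk_def)
    ultimately have "norm (\<Sum>k\<in>K. sum x (Bk k)) \<le> C" using C by metis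
    then show ?thesis by (simp add: y_def)
  qed
  have A: "(\<forall>k. norm (y k) \<ge> \<epsilon>) \<and> (\<forall>K. finite K \<longrightarrow> norm (sum y K) \<le> C)"
    using yge yC by simp
  show ?thesis by (rule exI[of _ y]) (rule A)
qed

lemma bounded_not_uc_c0:
  fixes x :: "nat \<Rightarrow> 'a::banach"
  assumes nuc: "\<not> unconditionally_convergent x"
    and C: "\<forall>F. finite F \<longrightarrow> norm (sum x F) \<le> C"
  shows "contains_c0 TYPE('a)"
proof -
  obtain \<epsilon> where eps: "\<epsilon> > 0" "\<forall>N. \<exists>F. finite F \<and> F \<subseteq> {N..} \<and> norm (sum x F) \<ge> \<epsilon>"
    using not_uc_eps[OF nuc] by blast
  obtain y :: "nat \<Rightarrow> 'a" where y: "\<forall>k. norm (y k) \<ge> \<epsilon>" "\<forall>K. finite K \<longrightarrow> norm (sum y K) \<le> C"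
    using blocks_y[OF eps(2) C] by blast
  obtain w :: "nat \<Rightarrow> 'a" where w: "\<forall>K. finite K \<longrightarrow> norm (sum w K) \<le> C"
    "\<forall>c. (\<forall>i. \<bar>c i\<bar> \<le> 1) \<longrightarrow> (\<forall>j q. j < q \<longrightarrow> \<bar>c j\<bar> * \<epsilon> \<le> 2 * norm (\<Sum>i<q. c i *\<^sub>R w i) + \<epsilon>/4)"
    using select_seq[OF eps(1) y(1) y(2)] by blast
  show ?thesis by (rule BP_core[OF eps(1) w(1) w(2)])
qed

lemma c0_embed_bad:
  fixes I :: "nat set set"
  assumes I: "ideal_on_nat I" and c: "contains_c0 TYPE('a::banach)"
  shows "\<exists>x::nat \<Rightarrow> 'a. \<not> unconditionally_convergent x \<and> \<not> meager (A_set I x)"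
proof -
  obtain T :: "(nat \<Rightarrow> real) \<Rightarrow> 'a" and m M where
    mM: "0 < m" "0 < M"
    and lin: "\<forall>f\<in>c0. \<forall>g\<in>c0. \<forall>a b. T (\<lambda>n. a * f n + b * g n) = a *\<^sub>R T f + b *\<^sub>R T g"
    and bnd: "\<forall>f\<in>c0. m * sup_norm f \<le> norm (T f) \<and> norm (T f) \<le> M * sup_norm f"
    using c unfolding contains_c0_def by blast
  define chi where "chi S = (\<lambda>i. if i \<in> S then 1 else (0::real))" for S :: "nat set"
  have chi_c0: "chi S \<in> c0" if S: "finite S" for S
  proof -
    obtain N where N: "S \<subseteq> {..<N}" using finite_nat_bounded[OF S] by blast
    have "eventually (\<lambda>i. chi S i = 0) sequentially"
      unfolding eventually_sequentially
    proof (intro exI[of _ N] allI impI)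
      fix i assume "N \<le> i"
      then have "i \<notin> S" using N by auto
      then show "chi S i = 0" by (simp add: chi_def)
    qed
    then have "chi S \<longlonglongrightarrow> 0" by (rule tendsto_eventually)
    then show ?thesis by (simp add: c0_def)
  qed
  have add: "T (\<lambda>n. f n + g n) = T f + T g" if "f \<in> c0" "g \<in> c0" for f g
  proof -
    have "T (\<lambda>n. 1 * f n + 1 * g n) = 1 *\<^sub>R T f + 1 *\<^sub>R T g"
      using lin that by blast
    then show ?thesis by simp
  qed
  have zero: "T (\<lambda>n. 0) = 0"
  proof -
    have "chi {} \<in> c0" using chi_c0 by simp
    then have "T (\<lambda>n. 0 * chi {} n + 0 * chi {} n) = 0 *\<^sub>R T (chi {}) + 0 *\<^sub>R T (chi {})"
      using lin by blast
    then show ?thesis by simp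
  qed
  have chi_sum: "T (chi S) = (\<Sum>i\<in>S. T (chi {i}))" if "finite S" for S
    using that
  proof (induction S rule: finite_induct)
    case empty
    have "chi {} = (\<lambda>n. 0)" by (simp add: chi_def)
    then show ?case using zero by simp
  next
    case (insert i S)
    have "chi (insert i S) = (\<lambda>n. chi {i} n + chi S n)"
      using insert.hyps by (auto simp: chi_def fun_eq_iff)
    then have "T (chi (insert i S)) = T (chi {i}) + T (chi S)"
      using add chi_c0 insert.hyps by simp
    then show ?case using insert by simp
  qed
  have supchi: "sup_norm (chi S) \<le> 1" for S
    by (rule sup_norm_le) (simp add: chi_def)
  define x where "x i = T (chi {i})" for i
  have part: "(\<Sum>i\<le>n. (if t i then 1 else 0) *\<^sub>R x i) = T (chi {i\<in>{..n}. t i})" for t n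
  proof -
    have "(\<Sum>i\<le>n. (if t i then 1 else 0) *\<^sub>R x i) = sum x {i\<in>{..n}. t i}" by (rule sum_if_scale)
    also have "\<dots> = T (chi {i\<in>{..n}. t i})" unfolding x_def by (rule chi_sum[symmetric]) simp
    finally show ?thesis .
  qed
  have normle: "norm (T (chi S)) \<le> M" if "finite S" for S
  proof -
    have "norm (T (chi S)) \<le> M * sup_norm (chi S)" using bnd chi_c0[OF that] by blast
    also have "\<dots> \<le> M * 1" using mM(2) supchi[of S] by (intro mult_left_mono) simp_all
    finally show ?thesis by simp
  qed
  have AU: "A_set I x = UNIV"
  proof (intro set_eqI iffI)
    fix t :: "nat \<Rightarrow> bool"
    have "{n. norm (\<Sum>i\<le>n. (if t i then 1 else 0) *\<^sub>R x i) > M} = {}"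
      using normle by (auto simp: part not_less)
    moreover have "{} \<in> I" using I by (simp add: ideal_on_nat_def)
    ultimately have "I_bounded I (\<lambda>n. \<Sum>i\<le>n. (if t i then 1 else 0) *\<^sub>R x i)"
      unfolding I_bounded_def using mM(2) by (intro exI[of _ M]) simp
    then show "t \<in> A_set I x" by (simp add: A_set_def)
  qed simp
  have nuc: "\<not> unconditionally_convergent x"
  proof
    assume "unconditionally_convergent x"
    then have "summable (x \<circ> id)" unfolding unconditionally_convergent_def using bij_id by blast
    then have "summable x" by simp
    then have "x \<longlonglongrightarrow> 0" by (rule summable_LIMSEQ_zero)
    then have "(\<lambda>n. norm (x n)) \<longlonglongrightarrow> 0" by (simp add: tendsto_norm_zero)
    then have "eventually (\<lambda>n. norm (x n) < m) sequentially"
      using mM(1) by (simp add: order_tendsto_iff)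
    then obtain N where "\<forall>n\<ge>N. norm (x n) < m" unfolding eventually_sequentially by blast
    then have n: "norm (x N) < m" by simp
    define n where "n = N"
    from n have n: "norm (x n) < m" by (simp add: n_def)
    have "1 \<le> sup_norm (chi {n})" using sup_norm_ge[OF chi_c0, of "{n}" n] by (simp add: chi_def)
    then have "m * 1 \<le> m * sup_norm (chi {n})" using mM(1) by (intro mult_left_mono) simp_all
    also have "\<dots> \<le> norm (x n)" using bnd chi_c0[of "{n}"] by (simp add: x_def)
    finally show False using n by simp
  qed
  show ?thesis using nuc AU not_meager_UNIV by (intro exI[of _ x]) simp
qed

theorem mainTheorem7:
  fixes I :: "nat set set"
  assumes "ideal_on_nat I"
    and "has_baire_property (ideal_as_cantor I)"
  shows "\<not> contains_c0 TYPE('a::banach) \<longleftrightarrow>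
    (\<forall>x::nat \<Rightarrow> 'a. \<not> unconditionally_convergent x \<longrightarrow> meager (A_set I x))"
proof
  assume nc: "\<not> contains_c0 TYPE('a)"
  show "\<forall>x::nat \<Rightarrow> 'a. \<not> unconditionally_convergent x \<longrightarrow> meager (A_set I x)"
  proof (intro allI impI)
    fix x :: "nat \<Rightarrow> 'a" assume nuc: "\<not> unconditionally_convergent x"
    have unb: "\<forall>C N. \<exists>F. finite F \<and> F \<subseteq> {N..} \<and> norm (sum x F) > C"
    proof (intro allI)
      fix C :: real and N :: nat
      define D where "D = C + (\<Sum>i<N. norm (x i))"
      have "\<not> (\<forall>F. finite F \<longrightarrow> norm (sum x F) \<le> D)"
        using bounded_not_uc_c0[OF nuc] nc by blast
      then obtain G where G: "finite G" "norm (sum x G) > D" by (auto simp: not_le)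
      define F where "F = G - {..<N}"
      have eqG: "sum x G = sum x (G \<inter> {..<N}) + sum x F"
        unfolding F_def using G(1) by (rule sum.Int_Diff)
      have "norm (sum x (G \<inter> {..<N})) \<le> (\<Sum>i<N. norm (x i))"
      proof -
        have "norm (sum x (G \<inter> {..<N})) \<le> (\<Sum>i\<in>G \<inter> {..<N}. norm (x i))" by (rule norm_sum)
        also have "\<dots> \<le> (\<Sum>i<N. norm (x i))" by (rule sum_mono2) auto
        finally show ?thesis .
      qed
      moreover have "norm (sum x G) \<le> norm (sum x (G \<inter> {..<N})) + norm (sum x F)"
        unfolding eqG by (rule norm_triangle_ineq)
      ultimately have "norm (sum x F) > C" using G(2) unfolding D_def by linarith
      moreover have "finite F" "F \<subseteq> {N..}" using G(1) by (auto simp: F_def)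
      ultimately show "\<exists>F. finite F \<and> F \<subseteq> {N..} \<and> norm (sum x F) > C" by blast
    qed
    have mg: "meager (ideal_as_cantor I)" by (rule ideal_meager[OF assms])
    obtain b where b: "strict_mono b" "\<forall>X. infinite {k. {b k..<b (Suc k)} \<subseteq> X} \<longrightarrow> X \<notin> I"
      using ideal_blocks[OF assms(1) mg] by blast
    show "meager (A_set I x)" by (rule A_meager[OF assms(1) b(1) b(2) unb])
  qed
next
  assume R: "\<forall>x::nat \<Rightarrow> 'a. \<not> unconditionally_convergent x \<longrightarrow> meager (A_set I x)"
  show "\<not> contains_c0 TYPE('a)"
  proof
    assume "contains_c0 TYPE('a)"
    then obtain x :: "nat \<Rightarrow> 'a" where "\<not> unconditionally_convergent x" "\<not> meager (A_set I x)"
      using c0_embed_bad[OF assms(1)] by blast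
    then show False using R by blast
  qed
qed


end
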